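(* Let $\xi$ be a continuous measure-valued martingale, and let $\varphi$ be a nonnegative measurable function on $\mathbb R^d$ such that $\mathbb E[\xi_0(\varphi)]<\infty$. Then $\xi(\varphi)=(\xi_t(\varphi))_{t\ge0}$ is a uniformly integrable continuous martingale.
   Context: $\mathcal P$ is the set of Borel probability measures on $\mathbb R^d$ with the weak topology; $\mu(\varphi)=\int\varphi\,d\mu$. A measure-valued martingale (MVM) is a $\mathcal P$-valued adapted process $\xi$ on a filtered probability space such that $\xi(\varphi)$ is a real-valued martingale for every bounded continuous $\varphi$; it is continuous if its trajectories are weakly continuous (equivalently, $\xi(\varphi)$ is continuous for each bounded continuous $\varphi$). *)

theory Defs
  imports "HOL-Probability.Probability"
begin

definition filtration_on :: "'w measure \<Rightarrow> (real \<Rightarrow> 'w measure) \<Rightarrow> bool" where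
  "filtration_on M F \<longleftrightarrow>
     (\<forall>t\<ge>0. space (F t) = space M \<and> sets (F t) \<subseteq> sets M) \<and>
     (\<forall>s t. 0 \<le> s \<longrightarrow> s \<le> t \<longrightarrow> sets (F s) \<subseteq> sets (F t))"

definition martingale :: "'w measure \<Rightarrow> (real \<Rightarrow> 'w measure) \<Rightarrow> (real \<Rightarrow> 'w \<Rightarrow> real) \<Rightarrow> bool" where
  "martingale M F X \<longleftrightarrow>
     (\<forall>t\<ge>0. X t \<in> borel_measurable (F t) \<and> integrable M (X t)) \<and>
     (\<forall>s t. 0 \<le> s \<longrightarrow> s \<le> t \<longrightarrow> (AE \<omega> in M. real_cond_exp M (F s) (X t) \<omega> = X s \<omega>))"

definition bcont :: "('d::euclidean_space \<Rightarrow> real) \<Rightarrow> bool" where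
  "bcont \<phi> \<longleftrightarrow> continuous_on UNIV \<phi> \<and> bounded (range \<phi>)"

definition mvm_eval :: "(real \<Rightarrow> 'w \<Rightarrow> 'd::euclidean_space measure) \<Rightarrow> ('d \<Rightarrow> real) \<Rightarrow> real \<Rightarrow> 'w \<Rightarrow> real" where
  "mvm_eval \<xi> \<phi> t \<omega> = (\<integral>x. \<phi> x \<partial>(\<xi> t \<omega>))"

text \<open>Measure-valued martingale: a P-valued adapted process (P = Borel probability
  measures on the space, with the Borel sigma-algebra of the weak topology, which coincides
  with the Giry sigma-algebra of subprob_algebra borel), such that \<xi>(\<phi>) is a martingale
  for every bounded continuous \<phi>.\<close>
definition MVM :: "'w measure \<Rightarrow> (real \<Rightarrow> 'w measure) \<Rightarrow> (real \<Rightarrow> 'w \<Rightarrow> 'd::euclidean_space measure) \<Rightarrow> bool" where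
  "MVM M F \<xi> \<longleftrightarrow>
     prob_space M \<and> filtration_on M F \<and>
     (\<forall>t\<ge>0. \<forall>\<omega>\<in>space M. prob_space (\<xi> t \<omega>) \<and> sets (\<xi> t \<omega>) = sets borel) \<and>
     (\<forall>t\<ge>0. \<xi> t \<in> measurable (F t) (subprob_algebra borel)) \<and>
     (\<forall>\<phi>. bcont \<phi> \<longrightarrow> martingale M F (mvm_eval \<xi> \<phi>))"

definition continuous_MVM :: "'w measure \<Rightarrow> (real \<Rightarrow> 'w measure) \<Rightarrow> (real \<Rightarrow> 'w \<Rightarrow> 'd::euclidean_space measure) \<Rightarrow> bool" where
  "continuous_MVM M F \<xi> \<longleftrightarrow> MVM M F \<xi> \<and>
     (\<forall>\<omega>\<in>space M. \<forall>\<phi>. bcont \<phi> \<longrightarrow> continuous_on {0..} (\<lambda>t. mvm_eval \<xi> \<phi> t \<omega>))"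

definition uniformly_integrable :: "'w measure \<Rightarrow> 'i set \<Rightarrow> ('i \<Rightarrow> 'w \<Rightarrow> real) \<Rightarrow> bool" where
  "uniformly_integrable M I X \<longleftrightarrow>
     (\<forall>t\<in>I. integrable M (X t)) \<and>
     ((\<lambda>K::real. SUP t\<in>I. \<integral>\<^sup>+\<omega>. ennreal \<bar>X t \<omega>\<bar> * indicator {\<omega>. K < \<bar>X t \<omega>\<bar>} \<omega> \<partial>M)
        \<longlongrightarrow> 0) at_top"

end

theory Submission
  imports Defs
begin

locale cmvm =
  fixes M :: "'w measure" and F :: "real \<Rightarrow> 'w measure"
    and \<xi> :: "real \<Rightarrow> 'w \<Rightarrow> 'd::euclidean_space measure"
  assumes cm: "continuous_MVM M F \<xi>"
begin

lemma prob: "prob_space M"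
  using cm unfolding continuous_MVM_def MVM_def by auto

lemma Fspace: "0 \<le> t \<Longrightarrow> space (F t) = space M"
  using cm unfolding continuous_MVM_def MVM_def filtration_on_def by auto

lemma Fsets: "0 \<le> t \<Longrightarrow> sets (F t) \<subseteq> sets M"
  using cm unfolding continuous_MVM_def MVM_def filtration_on_def by auto

lemma Fmono: "0 \<le> s \<Longrightarrow> s \<le> t \<Longrightarrow> sets (F s) \<subseteq> sets (F t)"
  using cm unfolding continuous_MVM_def MVM_def filtration_on_def by auto

lemma xiP: "0 \<le> t \<Longrightarrow> \<omega> \<in> space M \<Longrightarrow> prob_space (\<xi> t \<omega>)"
  using cm unfolding continuous_MVM_def MVM_def by auto

lemma xiS: "0 \<le> t \<Longrightarrow> \<omega> \<in> space M \<Longrightarrow> sets (\<xi> t \<omega>) = sets borel"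
  using cm unfolding continuous_MVM_def MVM_def by auto

lemma xiSp: "0 \<le> t \<Longrightarrow> \<omega> \<in> space M \<Longrightarrow> space (\<xi> t \<omega>) = UNIV"
  using xiS sets_eq_imp_space_eq by (metis space_borel)

lemma xiMF: "0 \<le> t \<Longrightarrow> \<xi> t \<in> measurable (F t) (subprob_algebra borel)"
  using cm unfolding continuous_MVM_def MVM_def by auto

lemma subalg: "0 \<le> t \<Longrightarrow> subalgebra M (F t)"
  using Fspace Fsets unfolding subalgebra_def by auto

lemma subalg2: "0 \<le> s \<Longrightarrow> s \<le> t \<Longrightarrow> subalgebra (F t) (F s)"
  using Fspace Fmono unfolding subalgebra_def by auto

lemma xiM: "0 \<le> t \<Longrightarrow> \<xi> t \<in> measurable M (subprob_algebra borel)"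
  using measurable_from_subalg[OF subalg xiMF] .

lemma mart: "bcont g \<Longrightarrow> martingale M F (mvm_eval \<xi> g)"
  using cm unfolding continuous_MVM_def MVM_def by auto

lemma contg: "\<omega> \<in> space M \<Longrightarrow> bcont g \<Longrightarrow> continuous_on {0..} (\<lambda>t. mvm_eval \<xi> g t \<omega>)"
  using cm unfolding continuous_MVM_def by auto

lemma NmeasF: "0 \<le> r \<Longrightarrow> r \<le> t \<Longrightarrow> \<psi> \<in> borel_measurable borel \<Longrightarrow>
   (\<lambda>\<omega>. \<integral>\<^sup>+x. \<psi> x \<partial>\<xi> r \<omega>) \<in> borel_measurable (F t)"
  by (rule measurable_from_subalg[OF subalg2], assumption+)
     (rule measurable_compose[OF xiMF nn_integral_measurable_subprob_algebra], auto)

lemma NmeasM: "0 \<le> r \<Longrightarrow> \<psi> \<in> borel_measurable borel \<Longrightarrow>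
   (\<lambda>\<omega>. \<integral>\<^sup>+x. \<psi> x \<partial>\<xi> r \<omega>) \<in> borel_measurable M"
  by (rule measurable_compose[OF xiM nn_integral_measurable_subprob_algebra], auto)

lemma sfsub: "0 \<le> t \<Longrightarrow> sigma_finite_subalgebra M (F t)"
  apply (rule finite_measure_subalgebra_is_sigma_finite)
  using prob subalg unfolding finite_measure_subalgebra_def finite_measure_subalgebra_axioms_def
  by (auto simp: prob_space_def)

lemma mvm_eval_nn:
  assumes "0 \<le> t" "\<omega> \<in> space M" "g \<in> borel_measurable borel" "\<And>x. 0 \<le> g x"
  shows "mvm_eval \<xi> g t \<omega> = enn2real (\<integral>\<^sup>+x. ennreal (g x) \<partial>\<xi> t \<omega>)"
  unfolding mvm_eval_def
  apply (rule integral_eq_nn_integral)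
  using assms(3) apply (subst measurable_cong_sets[OF xiS[OF assms(1,2)] refl]) apply assumption
  using assms(4) by auto

end

lemma open_approx:
  fixes U :: "'d::euclidean_space set" assumes U: "open U"
  obtains g where "\<And>n. bcont (g n)" "\<And>n x. 0 \<le> g n x" "\<And>n x. g n x \<le> 1"
    "\<And>x. incseq (\<lambda>n. g n x)" "\<And>x. (SUP n. ennreal (g n x)) = indicator U x"
proof (cases "U = UNIV")
  case True
  show ?thesis
    by (rule that[of "\<lambda>n x. 1"]) (auto simp: True bcont_def)
next
  case False
  define g where "g n x = min 1 (real n * infdist x (- U))" for n x
  have cl: "closed (- U)" "- U \<noteq> {}" using U False by auto
  show ?thesis
  proof (rule that[of g])
    fix n
    show "bcont (g n)"
      unfolding bcont_def g_def
    proof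
      show "continuous_on UNIV (\<lambda>x. min 1 (real n * infdist x (- U)))"
        by (intro continuous_intros)
      have "\<And>x. 0 \<le> real n * infdist x (- U)" by (simp add: infdist_nonneg)
      then have "range (\<lambda>x. min 1 (real n * infdist x (- U))) \<subseteq> cball 0 1"
        by (auto simp: dist_real_def)
      then show "bounded (range (\<lambda>x. min 1 (real n * infdist x (- U))))"
        using bounded_cball bounded_subset by blast
    qed
  next
    fix n x show "0 \<le> g n x" "g n x \<le> 1" unfolding g_def
      using mult_nonneg_nonneg[OF of_nat_0_le_iff infdist_nonneg] by auto
  next
    fix x show "incseq (\<lambda>n. g n x)"
      unfolding g_def incseq_def
      by (intro allI impI min.mono order.refl mult_right_mono) (auto simp: infdist_nonneg)
  next
    fix x
    show "(SUP n. ennreal (g n x)) = indicator U x"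
    proof (cases "x \<in> U")
      case True
      then have d: "0 < infdist x (- U)"
        using in_closed_iff_infdist_zero[OF cl, of x] infdist_nonneg[of x "- U"] by auto
      obtain n where "1 < real n * infdist x (- U)"
        using ex_less_of_nat_mult[OF d] by auto
      then have "g n x = 1" unfolding g_def by auto
      moreover have "\<And>m. g m x \<le> 1" unfolding g_def by auto
      ultimately have "(SUP n. ennreal (g n x)) = 1"
        by (intro antisym SUP_least) (auto intro!: SUP_upper2[of n])
      then show ?thesis using True by simp
    next
      case False
      then have "infdist x (- U) = 0"
        using in_closed_iff_infdist_zero[OF cl, of x] by auto
      then show ?thesis using False by (simp add: g_def)
    qed
  qed
qed

context cmvm
begin

lemma bind_nn:
  assumes "0 \<le> r" "B \<in> sets M" "f \<in> borel_measurable borel"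
  shows "(\<integral>\<^sup>+x. f x \<partial>(density M (indicator B) \<bind> \<xi> r))
       = (\<integral>\<^sup>+\<omega>. indicator B \<omega> * (\<integral>\<^sup>+x. f x \<partial>\<xi> r \<omega>) \<partial>M)"
proof -
  have m: "\<xi> r \<in> measurable (density M (indicator B)) (subprob_algebra borel)"
    using xiM[OF assms(1)] by (simp add: measurable_cong_sets[OF sets_density refl])
  show ?thesis
    apply (subst nn_integral_bind[OF assms(3) m])
    apply (rule nn_integral_density)
    using assms NmeasM by auto
qed

lemma bind_sets:
  assumes "0 \<le> r" "B \<in> sets M"
  shows "sets (density M (indicator B) \<bind> \<xi> r) = sets borel"
proof -
  have m: "\<xi> r \<in> measurable (density M (indicator B)) (subprob_algebra borel)"
    using xiM[OF assms(1)] by (simp add: measurable_cong_sets[OF sets_density refl])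
  have ne: "space M \<noteq> {}" using prob prob_space.not_empty by blast
  show ?thesis
    apply (rule sets_bind)
    using ne by (auto simp: xiS assms)
qed

lemma bcont_meas: "bcont g \<Longrightarrow> g \<in> borel_measurable borel"
  unfolding bcont_def by (auto intro: borel_measurable_continuous_onI)

lemma bcont_nn:
  assumes "0 \<le> t" "\<omega> \<in> space M" "bcont g" "\<And>x. 0 \<le> g x" "\<And>x. g x \<le> 1"
  shows "(\<integral>\<^sup>+x. ennreal (g x) \<partial>\<xi> t \<omega>) = ennreal (mvm_eval \<xi> g t \<omega>)"
proof -
  interpret P: prob_space "\<xi> t \<omega>" using xiP assms by auto
  have "(\<integral>\<^sup>+x. ennreal (g x) \<partial>\<xi> t \<omega>) \<le> (\<integral>\<^sup>+x. 1 \<partial>\<xi> t \<omega>)"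
    using assms by (intro nn_integral_mono) auto
  also have "\<dots> = 1" by (simp add: P.emeasure_space_1)
  finally have "(\<integral>\<^sup>+x. ennreal (g x) \<partial>\<xi> t \<omega>) \<noteq> \<infinity>" by (auto simp: top_unique)
  then show ?thesis
    using mvm_eval_nn[OF assms(1,2) bcont_meas[OF assms(3)] assms(4)]
    by (simp add: ennreal_enn2real_if)
qed

lemma KI_bcont:
  assumes "0 \<le> s" "s \<le> t" "B \<in> sets (F s)" "bcont g" "\<And>x. 0 \<le> g x" "\<And>x. g x \<le> 1"
  shows "(\<integral>\<^sup>+\<omega>. indicator B \<omega> * (\<integral>\<^sup>+x. ennreal (g x) \<partial>\<xi> t \<omega>) \<partial>M)
       = (\<integral>\<^sup>+\<omega>. indicator B \<omega> * (\<integral>\<^sup>+x. ennreal (g x) \<partial>\<xi> s \<omega>) \<partial>M)"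
proof -
  have t0: "0 \<le> t" using assms by auto
  have BM: "B \<in> sets M" using Fsets[OF assms(1)] assms(3) by auto
  define X where "X = mvm_eval \<xi> g"
  have mg: "martingale M F X" using mart[OF assms(4)] X_def by simp
  have Xi: "\<And>r. 0 \<le> r \<Longrightarrow> integrable M (X r)" and XF: "\<And>r. 0 \<le> r \<Longrightarrow> X r \<in> borel_measurable (F r)"
    using mg unfolding martingale_def by auto
  have ae: "AE \<omega> in M. real_cond_exp M (F s) (X t) \<omega> = X s \<omega>"
    using mg assms unfolding martingale_def by auto
  interpret S: sigma_finite_subalgebra M "F s" using sfsub assms by auto
  have XsM: "X s \<in> borel_measurable M"
    using measurable_from_subalg[OF subalg XF] assms by auto
  have eqr: "(\<integral>\<omega>. indicator B \<omega> * X t \<omega> \<partial>M) = (\<integral>\<omega>. indicator B \<omega> * X s \<omega> \<partial>M)"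
  proof -
    have "(\<integral>\<omega>. indicator B \<omega> * X t \<omega> \<partial>M) = (\<integral>\<omega>\<in>B. X t \<omega> \<partial>M)"
      by (simp add: set_lebesgue_integral_def)
    also have "\<dots> = (\<integral>\<omega>\<in>B. real_cond_exp M (F s) (X t) \<omega> \<partial>M)"
      by (rule S.real_cond_exp_intA[OF Xi[OF t0] assms(3)])
    also have "\<dots> = (\<integral>\<omega>. indicator B \<omega> * X s \<omega> \<partial>M)"
      unfolding set_lebesgue_integral_def
      apply (rule integral_cong_AE)
      using ae XsM BM by (auto simp: measurable_from_subalg[OF S.subalg])
    finally show ?thesis .
  qed
  have nnr: "\<And>r. 0 \<le> r \<Longrightarrow> (\<integral>\<^sup>+\<omega>. indicator B \<omega> * (\<integral>\<^sup>+x. ennreal (g x) \<partial>\<xi> r \<omega>) \<partial>M)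
      = ennreal (\<integral>\<omega>. indicator B \<omega> * X r \<omega> \<partial>M)"
  proof -
    fix r :: real assume r: "0 \<le> r"
    have "(\<integral>\<^sup>+\<omega>. indicator B \<omega> * (\<integral>\<^sup>+x. ennreal (g x) \<partial>\<xi> r \<omega>) \<partial>M)
       = (\<integral>\<^sup>+\<omega>. ennreal (indicator B \<omega> * X r \<omega>) \<partial>M)"
      apply (rule nn_integral_cong)
      using bcont_nn[OF r _ assms(4-6)] by (auto simp: X_def indicator_def)
    also have "\<dots> = ennreal (\<integral>\<omega>. indicator B \<omega> * X r \<omega> \<partial>M)"
      apply (rule nn_integral_eq_integral)
      using integrable_mult_indicator[OF BM Xi[OF r]] apply simp
      by (auto simp: X_def mvm_eval_def indicator_def intro!: AE_I2 integral_nonneg simp: assms(5))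
    finally show "?thesis r" .
  qed
  show ?thesis using nnr[OF t0] nnr[OF assms(1)] eqr by simp
qed

end

context cmvm
begin

lemma bind_fin:
  assumes "0 \<le> r" "B \<in> sets M"
  shows "emeasure (density M (indicator B) \<bind> \<xi> r) UNIV \<noteq> \<infinity>"
proof -
  have "emeasure (density M (indicator B) \<bind> \<xi> r) UNIV
      = (\<integral>\<^sup>+x. indicator UNIV x \<partial>(density M (indicator B) \<bind> \<xi> r))"
    by (subst nn_integral_indicator) (auto simp: bind_sets[OF assms])
  also have "\<dots> = (\<integral>\<^sup>+\<omega>. indicator B \<omega> * (\<integral>\<^sup>+x. indicator UNIV x \<partial>\<xi> r \<omega>) \<partial>M)"
    by (rule bind_nn[OF assms]) auto
  also have "\<dots> \<le> (\<integral>\<^sup>+\<omega>. 1 \<partial>M)"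
  proof (rule nn_integral_mono)
    fix \<omega> assume w: "\<omega> \<in> space M"
    interpret P: prob_space "\<xi> r \<omega>" using xiP assms w by auto
    have "(\<integral>\<^sup>+x. indicator UNIV x \<partial>\<xi> r \<omega>) = 1"
      using P.emeasure_space_1 xiSp[OF assms(1) w] sets.top[of "\<xi> r \<omega>"] by (subst nn_integral_indicator) auto
    then show "indicator B \<omega> * (\<integral>\<^sup>+x. indicator UNIV x \<partial>\<xi> r \<omega>) \<le> 1"
      by (auto simp: indicator_def)
  qed
  also have "\<dots> = 1" using prob prob_space.emeasure_space_1 by simp
  finally show ?thesis by (auto simp: top_unique)
qed

lemma bind_eq:
  assumes "0 \<le> s" "s \<le> t" "B \<in> sets (F s)"
  shows "density M (indicator B) \<bind> \<xi> t = density M (indicator B) \<bind> \<xi> s"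
proof -
  have t0: "0 \<le> t" using assms by auto
  have BM: "B \<in> sets M" using Fsets[OF assms(1)] assms(3) by auto
  show ?thesis
  proof (rule measure_eqI_generator_eq[where E="{S. open S}" and \<Omega>=UNIV and A="\<lambda>_. UNIV"])
    show "Int_stable {S::'d set. open S}" by (auto simp: Int_stable_def)
    show "{S::'d set. open S} \<subseteq> Pow UNIV" by auto
    show "sets (density M (indicator B) \<bind> \<xi> t) = sigma_sets UNIV {S. open S}"
      using bind_sets[OF t0 BM] sets_borel by simp
    show "sets (density M (indicator B) \<bind> \<xi> s) = sigma_sets UNIV {S. open S}"
      using bind_sets[OF assms(1) BM] sets_borel by simp
    show "range (\<lambda>_. UNIV) \<subseteq> {S::'d set. open S}" by auto
    show "(\<Union>i::nat. UNIV) = (UNIV::'d set)" by auto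
    show "\<And>i::nat. emeasure (density M (indicator B) \<bind> \<xi> t) UNIV \<noteq> \<infinity>"
      using bind_fin[OF t0 BM] .
  next
    fix U :: "'d set" assume "U \<in> {S. open S}"
    then have U: "open U" by auto
    obtain g where g: "\<And>n. bcont (g n)" "\<And>n x. 0 \<le> g n x" "\<And>n x. g n x \<le> 1"
      "\<And>x. incseq (\<lambda>n. g n x)" "\<And>x. (SUP n. ennreal (g n x)) = indicator U x"
      using open_approx[OF U] by blast
    have inc: "incseq (\<lambda>n x. ennreal (g n x))"
      using g(4) by (auto simp: incseq_def le_fun_def intro!: ennreal_leI)
    have em: "emeasure (density M (indicator B) \<bind> \<xi> r) U
       = (SUP n. \<integral>\<^sup>+\<omega>. indicator B \<omega> * (\<integral>\<^sup>+x. ennreal (g n x) \<partial>\<xi> r \<omega>) \<partial>M)"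
      if r: "0 \<le> r" for r
    proof -
      have "emeasure (density M (indicator B) \<bind> \<xi> r) U
          = (\<integral>\<^sup>+x. indicator U x \<partial>(density M (indicator B) \<bind> \<xi> r))"
        using U by (subst nn_integral_indicator) (auto simp: bind_sets[OF r BM])
      also have "\<dots> = (\<integral>\<^sup>+x. (SUP n. ennreal (g n x)) \<partial>(density M (indicator B) \<bind> \<xi> r))"
        using g(5) by simp
      also have "\<dots> = (SUP n. \<integral>\<^sup>+x. ennreal (g n x) \<partial>(density M (indicator B) \<bind> \<xi> r))"
        apply (rule nn_integral_monotone_convergence_SUP[OF inc])
        apply (subst measurable_cong_sets[OF bind_sets[OF r BM] refl])
        using bcont_meas[OF g(1)] by auto
      also have "\<dots> = (SUP n. \<integral>\<^sup>+\<omega>. indicator B \<omega> * (\<integral>\<^sup>+x. ennreal (g n x) \<partial>\<xi> r \<omega>) \<partial>M)"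
        using bind_nn[OF r BM] bcont_meas[OF g(1)] by simp
      finally show ?thesis .
    qed
    show "emeasure (density M (indicator B) \<bind> \<xi> t) U = emeasure (density M (indicator B) \<bind> \<xi> s) U"
      unfolding em[OF t0] em[OF assms(1)]
      using KI_bcont[OF assms g(1) g(2) g(3)] by simp
  qed
qed

lemma KI:
  assumes "0 \<le> s" "s \<le> t" "B \<in> sets (F s)" "\<psi> \<in> borel_measurable borel"
  shows "(\<integral>\<^sup>+\<omega>. indicator B \<omega> * (\<integral>\<^sup>+x. \<psi> x \<partial>\<xi> t \<omega>) \<partial>M)
       = (\<integral>\<^sup>+\<omega>. indicator B \<omega> * (\<integral>\<^sup>+x. \<psi> x \<partial>\<xi> s \<omega>) \<partial>M)"
proof -
  have t0: "0 \<le> t" using assms by auto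
  have BM: "B \<in> sets M" using Fsets[OF assms(1)] assms(3) by auto
  show ?thesis
    using bind_nn[OF t0 BM assms(4)] bind_nn[OF assms(1) BM assms(4)] bind_eq[OF assms(1-3)] by simp
qed

lemma KI_space:
  assumes "0 \<le> s" "s \<le> t" "\<psi> \<in> borel_measurable borel"
  shows "(\<integral>\<^sup>+\<omega>. (\<integral>\<^sup>+x. \<psi> x \<partial>\<xi> t \<omega>) \<partial>M) = (\<integral>\<^sup>+\<omega>. (\<integral>\<^sup>+x. \<psi> x \<partial>\<xi> s \<omega>) \<partial>M)"
proof -
  have sp: "space M \<in> sets (F s)" using Fspace[OF assms(1)] sets.top[of "F s"] by simp
  have "\<And>r. (\<integral>\<^sup>+\<omega>. (\<integral>\<^sup>+x. \<psi> x \<partial>\<xi> r \<omega>) \<partial>M) = (\<integral>\<^sup>+\<omega>. indicator (space M) \<omega> * (\<integral>\<^sup>+x. \<psi> x \<partial>\<xi> r \<omega>) \<partial>M)"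
    by (rule nn_integral_cong) auto
  then show ?thesis using KI[OF assms(1,2) sp assms(3)] by simp
qed

lemma KI0:
  assumes "0 \<le> t" "\<psi> \<in> borel_measurable borel"
  shows "(\<integral>\<^sup>+\<omega>. (\<integral>\<^sup>+x. \<psi> x \<partial>\<xi> t \<omega>) \<partial>M) = (\<integral>\<^sup>+\<omega>. (\<integral>\<^sup>+x. \<psi> x \<partial>\<xi> 0 \<omega>) \<partial>M)"
  using KI_space[of 0 t] assms by simp

end

context cmvm
begin

lemma Nset:
  assumes "0 \<le> r" "r \<le> t" "\<psi> \<in> borel_measurable borel"
  shows "{\<omega>\<in>space M. c < (\<integral>\<^sup>+x. \<psi> x \<partial>\<xi> r \<omega>)} \<in> sets (F t)"
proof -
  have m: "(\<lambda>\<omega>. \<integral>\<^sup>+x. \<psi> x \<partial>\<xi> r \<omega>) \<in> borel_measurable (F t)" using NmeasF[OF assms] .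
  have "(\<lambda>\<omega>. \<integral>\<^sup>+x. \<psi> x \<partial>\<xi> r \<omega>) -` {c<..} \<inter> space (F t) \<in> sets (F t)"
    by (rule measurable_sets[OF m]) simp
  moreover have "(\<lambda>\<omega>. \<integral>\<^sup>+x. \<psi> x \<partial>\<xi> r \<omega>) -` {c<..} \<inter> space (F t)
     = {\<omega>\<in>space M. c < (\<integral>\<^sup>+x. \<psi> x \<partial>\<xi> r \<omega>)}"
    using Fspace[of t] assms by auto
  ultimately show ?thesis by simp
qed

lemma NsetM:
  assumes "0 \<le> r" "\<psi> \<in> borel_measurable borel"
  shows "{\<omega>\<in>space M. c < (\<integral>\<^sup>+x. \<psi> x \<partial>\<xi> r \<omega>)} \<in> sets M"
  using Nset[OF assms(1) order.refl assms(2)] Fsets[OF assms(1)] by auto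

lemma doob_fin:
  assumes psi: "\<psi> \<in> borel_measurable borel" and S: "finite S" "S \<subseteq> {0..}"
  shows "c * emeasure M {\<omega>\<in>space M. \<exists>s\<in>S. c < (\<integral>\<^sup>+x. \<psi> x \<partial>\<xi> s \<omega>)}
     \<le> (\<integral>\<^sup>+\<omega>. (\<integral>\<^sup>+x. \<psi> x \<partial>\<xi> 0 \<omega>) \<partial>M)"
proof -
  define N where "N s \<omega> = (\<integral>\<^sup>+x. \<psi> x \<partial>\<xi> s \<omega>)" for s \<omega>
  define T where "T = Max (insert 0 S)"
  have T0: "0 \<le> T" and sT: "\<And>s. s \<in> S \<Longrightarrow> s \<le> T"
    using S by (auto simp: T_def)
  define A where "A s = {\<omega>\<in>space M. c < N s \<omega>} - (\<Union>r\<in>{r\<in>S. r < s}. {\<omega>\<in>space M. c < N r \<omega>})" for s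
  have AF: "A s \<in> sets (F s)" if s: "s \<in> S" for s
  proof -
    have s0: "0 \<le> s" using s S by auto
    show ?thesis unfolding A_def N_def
      apply (intro sets.Diff sets.finite_UN)
      using Nset[OF s0 order.refl psi] Nset[OF _ _ psi, of _ s] S s by auto
  qed
  have AM: "A s \<in> sets M" if "s \<in> S" for s
    using AF[OF that] Fsets[of s] that S by auto
  have sub: "{\<omega>\<in>space M. \<exists>s\<in>S. c < N s \<omega>} \<subseteq> (\<Union>s\<in>S. A s)"
  proof
    fix \<omega> assume w: "\<omega> \<in> {\<omega>\<in>space M. \<exists>s\<in>S. c < N s \<omega>}"
    define P where "P = {s\<in>S. c < N s \<omega>}"
    have P: "finite P" "P \<noteq> {}" using w S by (auto simp: P_def)
    define s0 where "s0 = Min P"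
    have "s0 \<in> P" using P by (simp add: s0_def)
    moreover have "\<And>r. r \<in> P \<Longrightarrow> s0 \<le> r" using P by (simp add: s0_def)
    ultimately have "\<omega> \<in> A s0" using w unfolding A_def P_def by force
    then show "\<omega> \<in> (\<Union>s\<in>S. A s)" using \<open>s0 \<in> P\<close> P_def by auto
  qed
  have sumle: "(\<Sum>s\<in>S. indicator (A s) \<omega>) \<le> (1::ennreal)" for \<omega>
  proof (cases "\<exists>s0\<in>S. \<omega> \<in> A s0")
    case True
    then obtain s0 where s0: "s0 \<in> S" "\<omega> \<in> A s0" by auto
    have "\<And>s. s \<in> S \<Longrightarrow> s \<noteq> s0 \<Longrightarrow> \<omega> \<notin> A s"
    proof
      fix s assume s: "s \<in> S" "s \<noteq> s0" "\<omega> \<in> A s"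
      show False
      proof (cases "s < s0")
        case True then show False using s s0 unfolding A_def by auto
      next
        case False then have "s0 < s" using s by auto
        then show False using s s0 unfolding A_def by auto
      qed
    qed
    then have "(\<Sum>s\<in>S. indicator (A s) \<omega>) = (indicator (A s0) \<omega> :: ennreal)"
      using S(1) s0(1) by (subst sum.remove[of S s0]) (auto intro!: sum.neutral)
    then show ?thesis by (simp add: indicator_def)
  next
    case False then show ?thesis by (auto intro!: sum.neutral simp: indicator_def)
  qed
  have "c * emeasure M {\<omega>\<in>space M. \<exists>s\<in>S. c < N s \<omega>} \<le> c * emeasure M (\<Union>s\<in>S. A s)"
    by (intro mult_left_mono emeasure_mono sub sets.finite_UN S AM) auto
  also have "\<dots> \<le> c * (\<Sum>s\<in>S. emeasure M (A s))"
    by (intro mult_left_mono emeasure_subadditive_finite S) (auto simp: AM)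
  also have "\<dots> = (\<Sum>s\<in>S. c * emeasure M (A s))" by (simp add: sum_distrib_left)
  also have "\<dots> \<le> (\<Sum>s\<in>S. \<integral>\<^sup>+\<omega>. indicator (A s) \<omega> * N T \<omega> \<partial>M)"
  proof (rule sum_mono)
    fix s assume s: "s \<in> S"
    have s0: "0 \<le> s" using s S by auto
    have "c * emeasure M (A s) = (\<integral>\<^sup>+\<omega>. c * indicator (A s) \<omega> \<partial>M)"
      using AM[OF s] by (simp add: nn_integral_cmult_indicator)
    also have "\<dots> \<le> (\<integral>\<^sup>+\<omega>. indicator (A s) \<omega> * N s \<omega> \<partial>M)"
      by (intro nn_integral_mono) (auto simp: A_def indicator_def less_imp_le)
    also have "\<dots> = (\<integral>\<^sup>+\<omega>. indicator (A s) \<omega> * N T \<omega> \<partial>M)"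
      unfolding N_def using KI[OF s0 sT[OF s] AF[OF s] psi] by simp
    finally show "c * emeasure M (A s) \<le> (\<integral>\<^sup>+\<omega>. indicator (A s) \<omega> * N T \<omega> \<partial>M)" .
  qed
  also have "\<dots> = (\<integral>\<^sup>+\<omega>. (\<Sum>s\<in>S. indicator (A s) \<omega> * N T \<omega>) \<partial>M)"
    apply (rule nn_integral_sum[symmetric])
    using AM NmeasM[OF T0 psi] unfolding N_def by measurable
  also have "\<dots> \<le> (\<integral>\<^sup>+\<omega>. N T \<omega> \<partial>M)"
  proof (rule nn_integral_mono)
    fix \<omega>
    have "(\<Sum>s\<in>S. indicator (A s) \<omega> * N T \<omega>) = (\<Sum>s\<in>S. indicator (A s) \<omega>) * N T \<omega>"
      by (simp add: sum_distrib_right)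
    also have "\<dots> \<le> 1 * N T \<omega>" by (intro mult_right_mono sumle) auto
    finally show "(\<Sum>s\<in>S. indicator (A s) \<omega> * N T \<omega>) \<le> N T \<omega>" by simp
  qed
  also have "\<dots> = (\<integral>\<^sup>+\<omega>. (\<integral>\<^sup>+x. \<psi> x \<partial>\<xi> 0 \<omega>) \<partial>M)"
    unfolding N_def using KI0[OF T0 psi] .
  finally show ?thesis unfolding N_def .
qed

definition "Qp = {q::real. q \<in> \<rat> \<and> 0 \<le> q}"

lemma doob_cnt:
  assumes psi: "\<psi> \<in> borel_measurable borel"
  shows "c * emeasure M {\<omega>\<in>space M. \<exists>s\<in>Qp. c < (\<integral>\<^sup>+x. \<psi> x \<partial>\<xi> s \<omega>)}
     \<le> (\<integral>\<^sup>+\<omega>. (\<integral>\<^sup>+x. \<psi> x \<partial>\<xi> 0 \<omega>) \<partial>M)"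
proof -
  have Qne: "Qp \<noteq> {}" unfolding Qp_def by auto
  have Qc: "countable Qp" unfolding Qp_def
    by (rule countable_subset[OF _ countable_rat]) auto
  define e where "e = from_nat_into Qp"
  have re: "range e = Qp" using Qne Qc by (simp add: e_def)
  have e0: "0 \<le> e k" for k
    using re rangeI[of e k] unfolding Qp_def by auto
  define E where "E k = {\<omega>\<in>space M. \<exists>s\<in>e ` {..k}. c < (\<integral>\<^sup>+x. \<psi> x \<partial>\<xi> s \<omega>)}" for k
  have EM: "E k \<in> sets M" for k
  proof -
    have "E k = (\<Union>s\<in>e ` {..k}. {\<omega>\<in>space M. c < (\<integral>\<^sup>+x. \<psi> x \<partial>\<xi> s \<omega>)})"
      unfolding E_def by auto
    also have "\<dots> \<in> sets M"
      apply (intro sets.finite_UN)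
      using NsetM[OF e0 psi] by auto
    finally show ?thesis .
  qed
  have inc: "incseq E" unfolding E_def incseq_def by auto
  have U: "(\<Union>k. E k) = {\<omega>\<in>space M. \<exists>s\<in>Qp. c < (\<integral>\<^sup>+x. \<psi> x \<partial>\<xi> s \<omega>)}"
    unfolding E_def re[symmetric] by auto
  have "c * emeasure M (\<Union>k. E k) = c * (SUP k. emeasure M (E k))"
    using SUP_emeasure_incseq[of E M] EM inc by (auto simp: image_subset_iff)
  also have "\<dots> = (SUP k. c * emeasure M (E k))" by (simp add: SUP_mult_left_ennreal)
  also have "\<dots> \<le> (\<integral>\<^sup>+\<omega>. (\<integral>\<^sup>+x. \<psi> x \<partial>\<xi> 0 \<omega>) \<partial>M)"
  proof (rule SUP_least)
    fix k
    show "c * emeasure M (E k) \<le> (\<integral>\<^sup>+\<omega>. (\<integral>\<^sup>+x. \<psi> x \<partial>\<xi> 0 \<omega>) \<partial>M)"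
      unfolding E_def
      apply (rule doob_fin[OF psi])
      using re unfolding Qp_def by auto
  qed
  finally show ?thesis using U by simp
qed

end

lemma dense_le:
  fixes h :: "real \<Rightarrow> real"
  assumes h: "continuous_on {0..} h" and Q: "\<And>q. q \<in> \<rat> \<Longrightarrow> 0 \<le> q \<Longrightarrow> h q \<le> e"
    and t: "0 \<le> t"
  shows "h t \<le> e"
proof -
  have "\<forall>j. \<exists>r\<in>\<rat>. t < r \<and> r < t + inverse (real (Suc j))"
    by (intro allI Rats_dense_in_real) auto
  then obtain q where q: "\<And>j. q j \<in> \<rat>" "\<And>j. t < q j" "\<And>j. q j < t + inverse (real (Suc j))"
    by metis
  have up: "(\<lambda>j. t + inverse (real (Suc j))) \<longlonglongrightarrow> t"
    using tendsto_add[OF tendsto_const LIMSEQ_inverse_real_of_nat, of t] by simp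
  have qt: "q \<longlonglongrightarrow> t"
    by (rule tendsto_sandwich[OF _ _ tendsto_const up]) (use q in \<open>auto intro!: always_eventually less_imp_le simp del: of_nat_Suc\<close>)
  have "(\<lambda>j. h (q j)) \<longlonglongrightarrow> h t"
    apply (rule continuous_on_tendsto_compose[OF h qt])
    using t q(2) by (auto intro!: always_eventually) (meson less_imp_le order.trans)
  then show ?thesis
    apply (rule LIMSEQ_le_const2)
    using Q q t by (auto intro!: exI[of _ 0]) (meson Q less_imp_le order.trans)
qed

context cmvm
begin

abbreviation NN :: "real \<Rightarrow> 'w \<Rightarrow> ('d \<Rightarrow> ennreal) \<Rightarrow> ennreal" where
  "NN t \<omega> \<psi> \<equiv> (\<integral>\<^sup>+x. \<psi> x \<partial>\<xi> t \<omega>)"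

definition Good :: "('d \<Rightarrow> ennreal) \<Rightarrow> bool" where
  "Good \<psi> \<longleftrightarrow> (AE \<omega> in M. (\<forall>t\<ge>0. NN t \<omega> \<psi> < \<infinity>) \<and> continuous_on {0..} (\<lambda>t. enn2real (NN t \<omega> \<psi>)))"

lemma Qset:
  assumes "\<psi> \<in> borel_measurable borel"
  shows "{\<omega>\<in>space M. \<exists>s\<in>Qp. c < NN s \<omega> \<psi>} \<in> sets M"
proof -
  have "{\<omega>\<in>space M. \<exists>s\<in>Qp. c < NN s \<omega> \<psi>} = (\<Union>s\<in>Qp. {\<omega>\<in>space M. c < NN s \<omega> \<psi>})" by auto
  also have "\<dots> \<in> sets M"
    apply (rule sets.countable_UN'')
    apply (rule countable_subset[OF _ countable_rat]) apply (auto simp: Qp_def)[1]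
    using NsetM[OF _ assms] by (auto simp: Qp_def)
  finally show ?thesis .
qed

lemma meas_xi: "0 \<le> t \<Longrightarrow> \<omega> \<in> space M \<Longrightarrow> f \<in> borel_measurable borel \<Longrightarrow> f \<in> borel_measurable (\<xi> t \<omega>)"
  by (subst measurable_cong_sets[OF xiS refl]) auto

lemma IncLim:
  fixes \<psi> :: "nat \<Rightarrow> 'd \<Rightarrow> ennreal"
  assumes psim: "\<And>n. \<psi> n \<in> borel_measurable borel" and inc: "incseq \<psi>"
    and fin: "(\<integral>\<^sup>+\<omega>. NN 0 \<omega> (\<lambda>x. SUP n. \<psi> n x) \<partial>M) < \<infinity>"
    and good: "\<And>n. Good (\<psi> n)"
  shows "Good (\<lambda>x. SUP n. \<psi> n x)"
proof -
  define \<Psi> where "\<Psi> x = (SUP n. \<psi> n x)" for x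
  define D where "D n x = \<Psi> x - \<psi> n x" for n x
  have Psim: "\<Psi> \<in> borel_measurable borel" unfolding \<Psi>_def using psim by measurable
  have Dm: "D n \<in> borel_measurable borel" for n unfolding D_def using Psim psim by measurable
  have le: "\<psi> n x \<le> \<Psi> x" for n x unfolding \<Psi>_def by (rule SUP_upper) auto
  have Dle: "D n x \<le> \<Psi> x" for n x unfolding D_def by (simp add: diff_le_self_ennreal)
  have Ddec': "\<And>n m x. n \<le> m \<Longrightarrow> D m x \<le> D n x"
    using inc unfolding D_def by (auto simp: incseq_def le_fun_def intro!: ennreal_minus_mono)
  have Ddec: "decseq D"
    by (intro decseq_SucI le_funI Ddec') simp
  define \<nu> where "\<nu> = M \<bind> \<xi> 0"
  have nu_int: "(\<integral>\<^sup>+x. f x \<partial>\<nu>) = (\<integral>\<^sup>+\<omega>. NN 0 \<omega> f \<partial>M)" if "f \<in> borel_measurable borel" for f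
    unfolding \<nu>_def by (rule nn_integral_bind[OF that xiM]) simp
  have ne: "space M \<noteq> {}" using prob prob_space.not_empty by blast
  have nu_sets: "sets \<nu> = sets borel" unfolding \<nu>_def
    by (rule sets_bind) (auto simp: xiS ne)
  have nu_meas: "f \<in> borel_measurable \<nu>" if "f \<in> borel_measurable borel" for f
    using that by (subst measurable_cong_sets[OF nu_sets refl])
  have finPsi: "(\<integral>\<^sup>+x. \<Psi> x \<partial>\<nu>) < \<infinity>" using fin nu_int[OF Psim] unfolding \<Psi>_def by simp
  have INF0: "(INF n. \<integral>\<^sup>+\<omega>. NN 0 \<omega> (D n) \<partial>M) = 0"
  proof -
    have "(INF n. \<integral>\<^sup>+\<omega>. NN 0 \<omega> (D n) \<partial>M) = (INF n. \<integral>\<^sup>+x. D n x \<partial>\<nu>)"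
      using nu_int[OF Dm] by simp
    also have "\<dots> = (\<integral>\<^sup>+x. (INF n. D n x) \<partial>\<nu>)"
    proof (rule nn_integral_monotone_convergence_INF_decseq[symmetric])
      show "decseq D" by (rule Ddec)
      fix i show "D i \<in> borel_measurable \<nu>" using nu_meas[OF Dm] .
      show "(\<integral>\<^sup>+x. D i x \<partial>\<nu>) < \<infinity>"
        using finPsi by (rule le_less_trans[rotated]) (intro nn_integral_mono Dle)
    qed
    also have "\<dots> = 0"
    proof (subst nn_integral_0_iff_AE)
      show "(\<lambda>x. INF n. D n x) \<in> borel_measurable \<nu>"
        using nu_meas[OF Dm] by measurable
      have "AE x in \<nu>. \<Psi> x \<noteq> \<infinity>"
        using finPsi by (intro nn_integral_PInf_AE nu_meas[OF Psim]) auto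
      then show "AE x in \<nu>. (INF n. D n x) = 0"
      proof (rule eventually_mono)
        fix x assume fx: "\<Psi> x \<noteq> \<infinity>"
        have inc_x: "incseq (\<lambda>n. \<psi> n x)" using inc by (auto simp: incseq_def le_fun_def)
        have "(\<lambda>n. \<psi> n x) \<longlonglongrightarrow> \<Psi> x"
          unfolding \<Psi>_def by (rule LIMSEQ_SUP[OF inc_x])
        then have "(\<lambda>n. \<Psi> x - \<psi> n x) \<longlonglongrightarrow> \<Psi> x - \<Psi> x"
          by (intro tendsto_diff_ennreal tendsto_const) (use fx in auto)
        moreover have "\<Psi> x - \<Psi> x = 0"
          using fx by (cases "\<Psi> x" rule: ennreal_cases) (auto simp: ennreal_minus)
        ultimately have l1: "(\<lambda>n. D n x) \<longlonglongrightarrow> 0" unfolding D_def by simp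
        have "decseq (\<lambda>n. D n x)" by (intro decseq_SucI Ddec') simp
        then have "(\<lambda>n. D n x) \<longlonglongrightarrow> (INF n. D n x)" by (rule LIMSEQ_INF)
        then show "(INF n. D n x) = 0" using l1 LIMSEQ_unique by blast
      qed
    qed
    finally show ?thesis .
  qed
  define c where "c k = ennreal (inverse (real (Suc k)))" for k
  define E where "E n k = {\<omega>\<in>space M. \<exists>q\<in>Qp. c k < NN q \<omega> (D n)}" for n k
  have EM: "E n k \<in> sets M" for n k unfolding E_def by (rule Qset[OF Dm])
  have AEk: "AE \<omega> in M. \<exists>n. \<omega> \<notin> E n k" for k
  proof -
    have Z: "(\<Inter>n. E n k) \<in> sets M" using EM by auto
    have "c k * emeasure M (\<Inter>n. E n k) \<le> (\<integral>\<^sup>+\<omega>. NN 0 \<omega> (D n) \<partial>M)" for n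
    proof -
      have "c k * emeasure M (\<Inter>n. E n k) \<le> c k * emeasure M (E n k)"
        by (intro mult_left_mono emeasure_mono EM) auto
      also have "\<dots> \<le> (\<integral>\<^sup>+\<omega>. NN 0 \<omega> (D n) \<partial>M)"
        unfolding E_def by (rule doob_cnt[OF Dm])
      finally show ?thesis .
    qed
    then have "c k * emeasure M (\<Inter>n. E n k) \<le> (INF n. \<integral>\<^sup>+\<omega>. NN 0 \<omega> (D n) \<partial>M)"
      by (intro INF_greatest) 
    then have "c k * emeasure M (\<Inter>n. E n k) \<le> 0"
      using INF0 by simp
    moreover have "c k \<noteq> 0" unfolding c_def by simp
    ultimately have "emeasure M (\<Inter>n. E n k) = 0" by (simp add: le_zero_eq)
    then have "(\<Inter>n. E n k) \<in> null_sets M" using Z by auto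
    then show ?thesis
      by (rule AE_I') auto
  qed
  have AEall: "AE \<omega> in M. \<omega> \<in> space M \<and> (\<forall>k. \<exists>n. \<omega> \<notin> E n k) \<and>
       (\<forall>n. (\<forall>t\<ge>0. NN t \<omega> (\<psi> n) < \<infinity>) \<and> continuous_on {0..} (\<lambda>t. enn2real (NN t \<omega> (\<psi> n))))"
  proof -
    have A1: "AE \<omega> in M. \<forall>k. \<exists>n. \<omega> \<notin> E n k" using AEk by (simp add: AE_all_countable)
    have A2: "AE \<omega> in M. \<forall>n. (\<forall>t\<ge>0. NN t \<omega> (\<psi> n) < \<infinity>) \<and> continuous_on {0..} (\<lambda>t. enn2real (NN t \<omega> (\<psi> n)))"
      using good unfolding Good_def by (simp add: AE_all_countable)
    show ?thesis using A1 A2 AE_space by eventually_elim blast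
  qed
  show ?thesis unfolding Good_def
  proof (rule eventually_mono[OF AEall])
    fix \<omega> assume asm: "\<omega> \<in> space M \<and> (\<forall>k. \<exists>n. \<omega> \<notin> E n k) \<and>
       (\<forall>n. (\<forall>t\<ge>0. NN t \<omega> (\<psi> n) < \<infinity>) \<and> continuous_on {0..} (\<lambda>t. enn2real (NN t \<omega> (\<psi> n))))"
    have w: "\<omega> \<in> space M" using asm by blast
    have H1: "\<forall>k. \<exists>n. \<omega> \<notin> E n k" using asm by blast
    have H2: "\<forall>n. (\<forall>t\<ge>0. NN t \<omega> (\<psi> n) < \<infinity>) \<and> continuous_on {0..} (\<lambda>t. enn2real (NN t \<omega> (\<psi> n)))"
      using asm by blast
    define g where "g m t = enn2real (NN t \<omega> (\<psi> m))" for m t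
    define G where "G t = enn2real (NN t \<omega> \<Psi>)" for t
    have fin_m: "NN t \<omega> (\<psi> m) = ennreal (g m t)" if "0 \<le> t" for m t
    proof -
      have "NN t \<omega> (\<psi> m) < \<infinity>" using H2 that by simp
      then show ?thesis unfolding g_def by (auto simp: ennreal_enn2real_if)
    qed
    have gcont: "continuous_on {0..} (g m)" for m using H2 unfolding g_def by auto
    have sup: "NN t \<omega> \<Psi> = (SUP m. NN t \<omega> (\<psi> m))" if "0 \<le> t" for t
      unfolding \<Psi>_def
      by (rule nn_integral_monotone_convergence_SUP[OF inc meas_xi[OF that w psim]])
    have mono: "NN t \<omega> (\<psi> n) \<le> NN t \<omega> (\<psi> m)" if "n \<le> m" for t n m
      using inc that by (intro nn_integral_mono) (auto simp: incseq_def le_fun_def)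
    have gmono: "g n t \<le> g m t" if "n \<le> m" "0 \<le> t" for t n m
    proof -
      have "ennreal (g n t) \<le> ennreal (g m t)" using mono[OF that(1), of t] fin_m[OF that(2)] by simp
      moreover have "0 \<le> g m t" unfolding g_def by simp
      ultimately show ?thesis by (simp add: ennreal_le_iff)
    qed
    have split: "NN t \<omega> (\<psi> m) \<le> NN t \<omega> (\<psi> n) + NN t \<omega> (D n)" if "0 \<le> t" for t n m
    proof -
      have "NN t \<omega> (\<psi> m) \<le> NN t \<omega> (\<lambda>x. \<psi> n x + D n x)"
        by (intro nn_integral_mono) (auto simp: D_def add_diff_inverse_ennreal le intro: le)
      also have "\<dots> = NN t \<omega> (\<psi> n) + NN t \<omega> (D n)"
        by (rule nn_integral_add[OF meas_xi[OF that w psim] meas_xi[OF that w Dm]])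
      finally show ?thesis .
    qed
    have key: "\<exists>n. \<forall>m\<ge>n. \<forall>t\<ge>0. g m t - g n t \<le> inverse (real (Suc k)) " for k
    proof -
      obtain n where n: "\<omega> \<notin> E n k" using H1 by auto
      have qb: "\<And>q. q \<in> Qp \<Longrightarrow> NN q \<omega> (D n) \<le> c k" using n w unfolding E_def by (auto simp: not_less)
      show ?thesis
      proof (intro exI allI impI)
        fix m t assume m: "n \<le> m" and t: "0 \<le> (t::real)"
        show "g m t - g n t \<le> inverse (real (Suc k))"
        proof (rule dense_le[OF _ _ t])
          show "continuous_on {0..} (\<lambda>t. g m t - g n t)" by (intro continuous_intros gcont)
          fix q :: real assume q: "q \<in> \<rat>" "0 \<le> q"
          have a: "NN q \<omega> (\<psi> m) \<le> NN q \<omega> (\<psi> n) + NN q \<omega> (D n)" by (rule split[OF q(2)])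
          have b: "NN q \<omega> (D n) \<le> c k" using qb q unfolding Qp_def by auto
          have "NN q \<omega> (\<psi> m) \<le> NN q \<omega> (\<psi> n) + c k" using a add_left_mono[OF b] by (rule order.trans)
          then have "ennreal (g m q) \<le> ennreal (g n q) + c k"
            using fin_m[OF q(2)] by simp
          also have "\<dots> = ennreal (g n q + inverse (real (Suc k)))"
            unfolding c_def by (simp add: ennreal_plus g_def)
          finally have "g m q \<le> g n q + inverse (real (Suc k))"
            by (subst (asm) ennreal_le_iff) (auto simp: g_def)
          then show "g m q - g n q \<le> inverse (real (Suc k))" by simp
        qed
      qed
    qed
    have bnd: "\<exists>n. \<forall>t\<ge>0. NN t \<omega> \<Psi> \<le> ennreal (g n t + inverse (real (Suc k)))" for k
    proof -
      obtain n where n: "\<forall>m\<ge>n. \<forall>t\<ge>0. g m t - g n t \<le> inverse (real (Suc k))" using key by blast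
      show ?thesis
      proof (intro exI allI impI)
        fix t :: real assume t: "0 \<le> t"
        show "NN t \<omega> \<Psi> \<le> ennreal (g n t + inverse (real (Suc k)))"
          unfolding sup[OF t]
        proof (rule SUP_least)
          fix m
          show "NN t \<omega> (\<psi> m) \<le> ennreal (g n t + inverse (real (Suc k)))"
          proof (cases "n \<le> m")
            case True
            then have "g m t \<le> g n t + inverse (real (Suc k))" using n t by force
            then show ?thesis using fin_m[OF t] by (simp add: ennreal_leI)
          next
            case False
            then have "g m t \<le> g n t" using gmono t by auto
            then have "g m t \<le> g n t + inverse (real (Suc k))" by (smt (verit) inverse_positive_iff_positive of_nat_0_less_iff zero_less_Suc)
            then show ?thesis using fin_m[OF t] by (simp add: ennreal_leI)
          qed
        qed
      qed
    qed
    have finPsi_t: "NN t \<omega> \<Psi> < \<infinity>" if "0 \<le> t" for t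
    proof -
      obtain n where "\<forall>t\<ge>0. NN t \<omega> \<Psi> \<le> ennreal (g n t + inverse (real (Suc 0)))"
        using bnd by blast
      then have "NN t \<omega> \<Psi> \<le> ennreal (g n t + inverse (real (Suc 0)))" using that by blast
      then show ?thesis using ennreal_less_top[of "g n t + inverse (real (Suc 0))"]
        by (simp add: le_less_trans)
    qed
    have Gfin: "NN t \<omega> \<Psi> = ennreal (G t)" if "0 \<le> t" for t
      using finPsi_t[OF that] unfolding G_def by (auto simp: ennreal_enn2real_if)
    have gG: "g m t \<le> G t" if "0 \<le> t" for m t
    proof -
      have "NN t \<omega> (\<psi> m) \<le> NN t \<omega> \<Psi>" unfolding sup[OF that] by (rule SUP_upper) auto
      then have "ennreal (g m t) \<le> ennreal (G t)" using fin_m[OF that] Gfin[OF that] by simp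
      moreover have "0 \<le> G t" unfolding G_def by simp
      ultimately show ?thesis by (simp add: ennreal_le_iff)
    qed
    have ul: "uniform_limit {0..} g G sequentially"
      unfolding uniform_limit_iff
    proof (intro allI impI)
      fix e :: real assume e: "0 < e"
      obtain k where k: "inverse (real (Suc k)) < e" using reals_Archimedean[OF e] by auto
      obtain n where n: "\<forall>t\<ge>0. NN t \<omega> \<Psi> \<le> ennreal (g n t + inverse (real (Suc k)))"
        using bnd by blast
      show "\<forall>\<^sub>F m in sequentially. \<forall>t\<in>{0..}. dist (g m t) (G t) < e"
        unfolding eventually_sequentially
      proof (intro exI allI impI ballI)
        fix m t assume m: "n \<le> m" and t: "t \<in> {0::real..}"
        then have t0: "0 \<le> t" by auto
        have "G t \<le> g n t + inverse (real (Suc k))"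
        proof -
          have "ennreal (G t) \<le> ennreal (g n t + inverse (real (Suc k)))"
            using n t0 Gfin[OF t0] by (metis (no_types))
          moreover have "0 \<le> g n t + inverse (real (Suc k))" unfolding g_def by simp
          ultimately show ?thesis by (simp add: ennreal_le_iff)
        qed
        moreover have "g n t \<le> g m t" using gmono m t0 by auto
        moreover have "g m t \<le> G t" using gG[OF t0] .
        ultimately show "dist (g m t) (G t) < e" using k by (simp add: dist_real_def)
      qed
    qed
    have "continuous_on {0..} G"
      by (rule uniform_limit_theorem[OF always_eventually ul]) (auto intro: gcont)
    then show "(\<forall>t\<ge>0. NN t \<omega> (\<lambda>x. SUP n. \<psi> n x) < \<infinity>) \<and>
        continuous_on {0..} (\<lambda>t. enn2real (NN t \<omega> (\<lambda>x. SUP n. \<psi> n x)))"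
      using finPsi_t unfolding G_def \<Psi>_def by auto
  qed
qed

end

lemma enn2real_add_fin: "a < \<top> \<Longrightarrow> b < \<top> \<Longrightarrow> enn2real (a + b) = enn2real a + enn2real (b::ennreal)"
  by (cases a rule: ennreal_cases; cases b rule: ennreal_cases) (auto simp flip: ennreal_plus)

context cmvm
begin

lemma NN_ind:
  assumes "A \<in> sets borel" "0 \<le> t" "\<omega> \<in> space M"
  shows "NN t \<omega> (indicator A) = ennreal (measure (\<xi> t \<omega>) A)"
proof -
  interpret P: prob_space "\<xi> t \<omega>" using xiP assms by auto
  show ?thesis
    using assms xiS[OF assms(2,3)] by (simp add: P.emeasure_eq_measure)
qed

lemma Good_set_iff:
  assumes A: "A \<in> sets borel"
  shows "Good (indicator A) \<longleftrightarrow> (AE \<omega> in M. continuous_on {0..} (\<lambda>t. measure (\<xi> t \<omega>) A))"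
proof -
  have eq: "((\<forall>t\<ge>0. NN t \<omega> (indicator A) < \<infinity>) \<and> continuous_on {0..} (\<lambda>t. enn2real (NN t \<omega> (indicator A))))
     \<longleftrightarrow> continuous_on {0..} (\<lambda>t. measure (\<xi> t \<omega>) A)" if w: "\<omega> \<in> space M" for \<omega>
  proof -
    have "continuous_on {0..} (\<lambda>t. enn2real (NN t \<omega> (indicator A))) \<longleftrightarrow> continuous_on {0..} (\<lambda>t. measure (\<xi> t \<omega>) A)"
      by (rule continuous_on_cong) (auto simp: NN_ind[OF A _ w])
    then show ?thesis by (auto simp: NN_ind[OF A _ w])
  qed
  show ?thesis unfolding Good_def
  proof
    assume "AE \<omega> in M. (\<forall>t\<ge>0. NN t \<omega> (indicator A) < \<infinity>) \<and> continuous_on {0..} (\<lambda>t. enn2real (NN t \<omega> (indicator A)))"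
    with AE_space show "AE \<omega> in M. continuous_on {0..} (\<lambda>t. measure (\<xi> t \<omega>) A)"
      by eventually_elim (use eq in blast)
  next
    assume "AE \<omega> in M. continuous_on {0..} (\<lambda>t. measure (\<xi> t \<omega>) A)"
    with AE_space show "AE \<omega> in M. (\<forall>t\<ge>0. NN t \<omega> (indicator A) < \<infinity>) \<and> continuous_on {0..} (\<lambda>t. enn2real (NN t \<omega> (indicator A)))"
      by eventually_elim (use eq in blast)
  qed
qed

lemma ind_fin:
  assumes A: "A \<in> sets borel"
  shows "(\<integral>\<^sup>+\<omega>. NN 0 \<omega> (indicator A) \<partial>M) < \<infinity>"
proof -
  have "(\<integral>\<^sup>+\<omega>. NN 0 \<omega> (indicator A) \<partial>M) \<le> (\<integral>\<^sup>+\<omega>. 1 \<partial>M)"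
    by (intro nn_integral_mono) (auto simp: NN_ind[OF A] prob_space.prob_le_1[OF xiP])
  also have "\<dots> = 1" using prob prob_space.emeasure_space_1 by simp
  finally show ?thesis by (auto simp: top_unique le_less_trans)
qed

lemma Good_add:
  assumes f: "f \<in> borel_measurable borel" and g: "g \<in> borel_measurable borel"
    and Gf: "Good f" and Gg: "Good g"
  shows "Good (\<lambda>x. f x + g x)"
  unfolding Good_def
proof -
  from Gf Gg AE_space show "AE \<omega> in M. (\<forall>t\<ge>0. NN t \<omega> (\<lambda>x. f x + g x) < \<infinity>) \<and>
      continuous_on {0..} (\<lambda>t. enn2real (NN t \<omega> (\<lambda>x. f x + g x)))"
    unfolding Good_def
  proof eventually_elim
    case (elim \<omega>)
    have eq: "NN t \<omega> (\<lambda>x. f x + g x) = NN t \<omega> f + NN t \<omega> g" if "0 \<le> t" for t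
      by (rule nn_integral_add[OF meas_xi[OF that elim(3) f] meas_xi[OF that elim(3) g]])
    have fin: "NN t \<omega> (\<lambda>x. f x + g x) < \<infinity>" if "0 \<le> t" for t
      using elim that eq[OF that] by auto
    have "continuous_on {0..} (\<lambda>t. enn2real (NN t \<omega> f) + enn2real (NN t \<omega> g))"
      using elim by (intro continuous_intros) auto
    moreover have "continuous_on {0..} (\<lambda>t. enn2real (NN t \<omega> (\<lambda>x. f x + g x))) \<longleftrightarrow>
        continuous_on {0..} (\<lambda>t. enn2real (NN t \<omega> f) + enn2real (NN t \<omega> g))"
      by (rule continuous_on_cong) (use elim eq in \<open>auto intro!: enn2real_add_fin\<close>)
    ultimately show ?case using fin by auto
  qed
qed

lemma Good_zero: "Good (\<lambda>x. 0)"
  unfolding Good_def by (auto intro!: AE_I2)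

lemma Good_set:
  assumes A: "A \<in> sets borel"
  shows "Good (indicator A)"
proof -
  have Asig: "A \<in> sigma_sets UNIV {S. open S}" using A[unfolded sets_borel] .
  have IS: "Int_stable {S::'d set. open S}" by (auto simp: Int_stable_def)
  have CL: "{S::'d set. open S} \<subseteq> Pow UNIV" by auto
  show ?thesis
  proof (rule sigma_sets_induct_disjoint[OF IS CL Asig])
    fix U :: "'d set" assume "U \<in> {S. open S}"
    then have U: "open U" by auto
    obtain g where g: "\<And>n. bcont (g n)" "\<And>n x. 0 \<le> g n x" "\<And>n x. g n x \<le> 1"
      "\<And>x. incseq (\<lambda>n. g n x)" "\<And>x. (SUP n. ennreal (g n x)) = indicator U x"
      using open_approx[OF U] by blast
    define \<psi> where "\<psi> n x = ennreal (g n x)" for n x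
    have psim: "\<psi> n \<in> borel_measurable borel" for n
      unfolding \<psi>_def using bcont_meas[OF g(1)] by measurable
    have inc: "incseq \<psi>"
      using g(4) unfolding \<psi>_def by (auto simp: incseq_def le_fun_def intro!: ennreal_leI)
    have Gn: "Good (\<psi> n)" for n
      unfolding Good_def
    proof (rule AE_I2)
      fix \<omega> assume w: "\<omega> \<in> space M"
      have eq: "NN t \<omega> (\<psi> n) = ennreal (mvm_eval \<xi> (g n) t \<omega>)" if "0 \<le> t" for t
        unfolding \<psi>_def by (rule bcont_nn[OF that w g(1) g(2) g(3)])
      have nn: "0 \<le> mvm_eval \<xi> (g n) t \<omega>" for t
        unfolding mvm_eval_def using Bochner_Integration.integral_nonneg_AE[of "g n" "\<xi> t \<omega>"] g(2) by auto
      have "continuous_on {0..} (\<lambda>t. enn2real (NN t \<omega> (\<psi> n))) \<longleftrightarrow> continuous_on {0..} (\<lambda>t. mvm_eval \<xi> (g n) t \<omega>)"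
        by (rule continuous_on_cong) (auto simp: eq nn)
      then show "(\<forall>t\<ge>0. NN t \<omega> (\<psi> n) < \<infinity>) \<and> continuous_on {0..} (\<lambda>t. enn2real (NN t \<omega> (\<psi> n)))"
        using contg[OF w g(1)] eq by auto
    qed
    have SUPeq: "(\<lambda>x. SUP n. \<psi> n x) = indicator U" using g(5) unfolding \<psi>_def by auto
    have "Good (\<lambda>x. SUP n. \<psi> n x)"
      by (rule IncLim[OF psim inc _ Gn]) (use ind_fin[OF borel_open[OF U]] in \<open>simp add: SUPeq\<close>)
    then show "Good (indicator U)" using SUPeq by simp
  next
    have e: "(indicator {} :: 'd \<Rightarrow> ennreal) = (\<lambda>x. 0)" by (rule ext) simp
    show "Good (indicator {})" using Good_zero by (simp only: e)
  next
    fix A :: "'d set" assume compl1: "A \<in> sigma_sets UNIV {S. open S}" and compl2: "Good (indicator A)"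
    have Ab: "A \<in> sets borel" using compl1 by (simp add: sets_borel)
    have cb: "UNIV - A \<in> sets borel" using Ab by auto
    have eq: "measure (\<xi> t \<omega>) (UNIV - A) = 1 - measure (\<xi> t \<omega>) A" if "0 \<le> t" "\<omega> \<in> space M" for t \<omega>
    proof -
      interpret P: prob_space "\<xi> t \<omega>" using xiP that by auto
      show ?thesis using P.prob_compl[of A] xiS[OF that] xiSp[OF that] Ab by simp
    qed
    have "AE \<omega> in M. continuous_on {0..} (\<lambda>t. measure (\<xi> t \<omega>) A)"
      using compl2 Good_set_iff[OF Ab] by simp
    with AE_space have "AE \<omega> in M. continuous_on {0..} (\<lambda>t. measure (\<xi> t \<omega>) (UNIV - A))"
    proof eventually_elim
      case (elim \<omega>)
      have "continuous_on {0..} (\<lambda>t. 1 - measure (\<xi> t \<omega>) A)"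
        using elim by (intro continuous_intros) auto
      moreover have "continuous_on {0..} (\<lambda>t. measure (\<xi> t \<omega>) (UNIV - A)) \<longleftrightarrow> continuous_on {0..} (\<lambda>t. 1 - measure (\<xi> t \<omega>) A)"
        by (rule continuous_on_cong) (auto simp: eq elim)
      ultimately show ?case by simp
    qed
    then show "Good (indicator (UNIV - A))" using Good_set_iff[OF cb] by simp
  next
    fix A :: "nat \<Rightarrow> 'd set" assume union1: "disjoint_family A"
      and union2: "range A \<subseteq> sigma_sets UNIV {S. open S}" and union3: "\<And>i. Good (indicator (A i))"
    have Ab: "A i \<in> sets borel" for i using union2 by (auto simp: sets_borel)
    define \<psi> where "\<psi> n x = (\<Sum>i<n. indicator (A i) x :: ennreal)" for n x
    have psim: "\<psi> n \<in> borel_measurable borel" for n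
      unfolding \<psi>_def using Ab by measurable
    have inc: "incseq \<psi>"
      unfolding \<psi>_def incseq_def le_fun_def by (auto intro!: sum_mono2)
    have Gn: "Good (\<psi> n)" for n
    proof (induction n)
      case 0 show ?case using Good_zero by (simp add: \<psi>_def)
    next
      case (Suc n)
      have "Good (\<lambda>x. \<psi> n x + indicator (A n) x)"
        by (rule Good_add[OF psim _ Suc union3]) (use Ab in measurable)
      then show ?case by (simp add: \<psi>_def add.commute)
    qed
    have SUPeq: "(\<lambda>x. SUP n. \<psi> n x) = indicator (\<Union>i. A i)"
      using suminf_indicator[OF union1] unfolding \<psi>_def by (auto simp: suminf_eq_SUP)
    have Ub: "(\<Union>i. A i) \<in> sets borel" using Ab by auto
    have "Good (\<lambda>x. SUP n. \<psi> n x)"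
      by (rule IncLim[OF psim inc _ Gn]) (use ind_fin[OF Ub] in \<open>simp add: SUPeq\<close>)
    then show "Good (indicator (\<Union>i. A i))" using SUPeq by simp
  qed
qed

lemma Good_all:
  assumes psi: "\<psi> \<in> borel_measurable borel"
  shows "(\<integral>\<^sup>+\<omega>. NN 0 \<omega> \<psi> \<partial>M) < \<infinity> \<Longrightarrow> Good \<psi>"
  using psi
proof (induction rule: borel_measurable_induct)
  case (cong f g)
  then have "f = g" by auto
  then show ?case using cong by simp
next
  case (set A)
  then show ?case using Good_set by simp
next
  case (mult u c)
  show ?case
  proof (cases "c = 0")
    case True then show ?thesis using Good_zero by simp
  next
    case False
    have eq: "NN t \<omega> (\<lambda>x. c * u x) = c * NN t \<omega> u" if "0 \<le> t" "\<omega> \<in> space M" for t \<omega>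
      by (rule nn_integral_cmult[OF meas_xi[OF that mult(2)]])
    have "(\<integral>\<^sup>+\<omega>. NN 0 \<omega> (\<lambda>x. c * u x) \<partial>M) = (\<integral>\<^sup>+\<omega>. c * NN 0 \<omega> u \<partial>M)"
      by (rule nn_integral_cong) (simp add: eq)
    also have "\<dots> = c * (\<integral>\<^sup>+\<omega>. NN 0 \<omega> u \<partial>M)"
      by (rule nn_integral_cmult[OF NmeasM[OF order.refl mult(2)]])
    finally have "c * (\<integral>\<^sup>+\<omega>. NN 0 \<omega> u \<partial>M) < \<infinity>" using mult(5) by simp
    then have "(\<integral>\<^sup>+\<omega>. NN 0 \<omega> u \<partial>M) < \<infinity>" using False by (auto simp: ennreal_mult_less_top)
    then have Gu: "Good u" using mult(4) by simp
    show ?thesis unfolding Good_def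
      using Gu AE_space unfolding Good_def
    proof eventually_elim
      case (elim \<omega>)
      have fin: "NN t \<omega> (\<lambda>x. c * u x) < \<infinity>" if "0 \<le> t" for t
        using elim that eq[OF that elim(2)] mult(1) by (auto simp: ennreal_mult_less_top)
      have "continuous_on {0..} (\<lambda>t. enn2real c * enn2real (NN t \<omega> u))"
        using elim by (intro continuous_intros) auto
      moreover have "continuous_on {0..} (\<lambda>t. enn2real (NN t \<omega> (\<lambda>x. c * u x))) \<longleftrightarrow>
          continuous_on {0..} (\<lambda>t. enn2real c * enn2real (NN t \<omega> u))"
        by (rule continuous_on_cong) (use elim eq in \<open>auto simp: enn2real_mult\<close>)
      ultimately show ?case using fin by auto
    qed
  qed
next
  case (add u v)
  have eq: "NN t \<omega> (\<lambda>x. v x + u x) = NN t \<omega> v + NN t \<omega> u" if "0 \<le> t" "\<omega> \<in> space M" for t \<omega>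
    by (rule nn_integral_add[OF meas_xi[OF that \<open>v \<in> borel_measurable borel\<close>] meas_xi[OF that \<open>u \<in> borel_measurable borel\<close>]])
  have "(\<integral>\<^sup>+\<omega>. NN 0 \<omega> (\<lambda>x. v x + u x) \<partial>M) = (\<integral>\<^sup>+\<omega>. NN 0 \<omega> v + NN 0 \<omega> u \<partial>M)"
    by (rule nn_integral_cong) (simp add: eq)
  also have "\<dots> = (\<integral>\<^sup>+\<omega>. NN 0 \<omega> v \<partial>M) + (\<integral>\<^sup>+\<omega>. NN 0 \<omega> u \<partial>M)"
    by (rule nn_integral_add[OF NmeasM[OF order.refl \<open>v \<in> borel_measurable borel\<close>] NmeasM[OF order.refl \<open>u \<in> borel_measurable borel\<close>]])
  finally have "(\<integral>\<^sup>+\<omega>. NN 0 \<omega> v \<partial>M) + (\<integral>\<^sup>+\<omega>. NN 0 \<omega> u \<partial>M) < \<infinity>" using add.prems by simp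
  then have "Good u" "Good v" using add.IH by auto
  then show ?case using Good_add[OF \<open>v \<in> borel_measurable borel\<close> \<open>u \<in> borel_measurable borel\<close>] by simp
next
  case (seq U)
  have SUPf: "(SUP i. U i) = (\<lambda>x. SUP i. U i x)" by (rule ext) (simp only: SUP_apply)
  have fin: "(\<integral>\<^sup>+\<omega>. NN 0 \<omega> (\<lambda>x. SUP i. U i x) \<partial>M) < \<infinity>" using seq.prems SUPf by simp
  have GU: "Good (U i)" for i
  proof (rule seq.IH)
    have "(\<integral>\<^sup>+\<omega>. NN 0 \<omega> (U i) \<partial>M) \<le> (\<integral>\<^sup>+\<omega>. NN 0 \<omega> (\<lambda>x. SUP i. U i x) \<partial>M)"
      by (intro nn_integral_mono) (auto intro!: SUP_upper)
    then show "(\<integral>\<^sup>+\<omega>. NN 0 \<omega> (U i) \<partial>M) < \<infinity>" using fin by (rule le_less_trans)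
  qed
  show ?case using IncLim[OF seq.hyps(1) \<open>incseq U\<close> fin GU] SUPf by simp
qed

end

context cmvm
begin

lemma setint:
  assumes r: "0 \<le> r" and A: "A \<in> sets M" and psim: "\<psi> \<in> borel_measurable borel"
    and fin: "(\<integral>\<^sup>+\<omega>. NN r \<omega> \<psi> \<partial>M) < \<infinity>"
    and X: "\<And>\<omega>. \<omega> \<in> space M \<Longrightarrow> X \<omega> = enn2real (NN r \<omega> \<psi>)"
    and Xi: "integrable M X"
  shows "ennreal (\<integral>\<omega>\<in>A. X \<omega> \<partial>M) = (\<integral>\<^sup>+\<omega>. indicator A \<omega> * NN r \<omega> \<psi> \<partial>M)"
proof -
  have "(\<integral>\<omega>\<in>A. X \<omega> \<partial>M) = (\<integral>\<omega>. indicator A \<omega> * X \<omega> \<partial>M)"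
    by (simp add: set_lebesgue_integral_def)
  moreover have "ennreal (\<integral>\<omega>. indicator A \<omega> * X \<omega> \<partial>M) = (\<integral>\<^sup>+\<omega>. ennreal (indicator A \<omega> * X \<omega>) \<partial>M)"
  proof (rule nn_integral_eq_integral[symmetric])
    show "integrable M (\<lambda>\<omega>. indicator A \<omega> * X \<omega>)"
      using integrable_mult_indicator[OF A Xi] by simp
    show "AE \<omega> in M. 0 \<le> indicator A \<omega> * X \<omega>"
      by (rule AE_I2) (simp add: X)
  qed
  moreover have "(\<integral>\<^sup>+\<omega>. ennreal (indicator A \<omega> * X \<omega>) \<partial>M) = (\<integral>\<^sup>+\<omega>. indicator A \<omega> * NN r \<omega> \<psi> \<partial>M)"
  proof (rule nn_integral_cong_AE)
    have "AE \<omega> in M. NN r \<omega> \<psi> \<noteq> \<infinity>"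
      using fin by (intro nn_integral_PInf_AE NmeasM[OF r psim]) auto
    with AE_space show "AE \<omega> in M. ennreal (indicator A \<omega> * X \<omega>) = indicator A \<omega> * NN r \<omega> \<psi>"
      by eventually_elim (auto simp: X indicator_def ennreal_enn2real_if)
  qed
  ultimately show ?thesis by simp
qed

end

theorem lemma2p2:
  fixes M :: "'w measure" and F :: "real \<Rightarrow> 'w measure"
    and \<xi> :: "real \<Rightarrow> 'w \<Rightarrow> 'd::euclidean_space measure"
    and \<phi> :: "'d \<Rightarrow> real"
  assumes "continuous_MVM M F \<xi>"
    and "\<phi> \<in> borel_measurable borel"
    and "\<And>x. 0 \<le> \<phi> x"
    and "(\<integral>\<^sup>+\<omega>. (\<integral>\<^sup>+x. ennreal (\<phi> x) \<partial>(\<xi> 0 \<omega>)) \<partial>M) < \<infinity>"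
  shows "martingale M F (mvm_eval \<xi> \<phi>)
    \<and> (AE \<omega> in M. continuous_on {0..} (\<lambda>t. mvm_eval \<xi> \<phi> t \<omega>))
    \<and> uniformly_integrable M {0..} (mvm_eval \<xi> \<phi>)"
proof -
  interpret cmvm M F \<xi> using assms(1) by unfold_locales
  define \<psi> where "\<psi> x = ennreal (\<phi> x)" for x
  have psim: "\<psi> \<in> borel_measurable borel" unfolding \<psi>_def using assms(2) by measurable
  have fin0: "(\<integral>\<^sup>+\<omega>. NN 0 \<omega> \<psi> \<partial>M) < \<infinity>" using assms(4) unfolding \<psi>_def .
  have fint: "(\<integral>\<^sup>+\<omega>. NN t \<omega> \<psi> \<partial>M) < \<infinity>" if "0 \<le> t" for t
    using fin0 KI0[OF that psim] by simp
  have ev: "mvm_eval \<xi> \<phi> t \<omega> = enn2real (NN t \<omega> \<psi>)" if "0 \<le> t" "\<omega> \<in> space M" for t \<omega>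
    unfolding \<psi>_def by (rule mvm_eval_nn[OF that assms(2) assms(3)])
  define X where "X = mvm_eval \<xi> \<phi>"
  have XF: "X t \<in> borel_measurable (F t)" if t: "0 \<le> t" for t
  proof -
    have "(\<lambda>\<omega>. enn2real (NN t \<omega> \<psi>)) \<in> borel_measurable (F t)"
      using NmeasF[OF t order.refl psim] by measurable
    then show ?thesis
      by (rule measurable_cong[THEN iffD1, rotated]) (use ev t Fspace[OF t] in \<open>auto simp: X_def\<close>)
  qed
  have XM: "X t \<in> borel_measurable M" if t: "0 \<le> t" for t
    using measurable_from_subalg[OF subalg[OF t] XF[OF t]] .
  have Xi: "integrable M (X t)" if t: "0 \<le> t" for t
  proof (rule integrableI_nonneg[OF XM[OF t]])
    show "AE \<omega> in M. 0 \<le> X t \<omega>" by (rule AE_I2) (simp add: X_def ev t)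
    have "(\<integral>\<^sup>+\<omega>. ennreal (X t \<omega>) \<partial>M) \<le> (\<integral>\<^sup>+\<omega>. NN t \<omega> \<psi> \<partial>M)"
      by (intro nn_integral_mono) (auto simp: X_def ev t ennreal_enn2real_if)
    then show "(\<integral>\<^sup>+\<omega>. ennreal (X t \<omega>) \<partial>M) < \<infinity>" using fint[OF t] by (rule le_less_trans)
  qed
  have mart_part: "martingale M F X"
    unfolding martingale_def
  proof (intro conjI allI impI)
    fix t :: real assume "0 \<le> t"
    then show "X t \<in> borel_measurable (F t)" "integrable M (X t)" using XF Xi by auto
  next
    fix s t :: real assume s: "0 \<le> s" and st: "s \<le> t"
    have t: "0 \<le> t" using s st by auto
    interpret S: sigma_finite_subalgebra M "F s" using sfsub[OF s] .
    show "AE \<omega> in M. real_cond_exp M (F s) (X t) \<omega> = X s \<omega>"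
    proof (rule S.real_cond_exp_charact)
      fix A assume A: "A \<in> sets (F s)"
      have AM: "A \<in> sets M" using A Fsets[OF s] by auto
      have "ennreal (\<integral>\<omega>\<in>A. X t \<omega> \<partial>M) = ennreal (\<integral>\<omega>\<in>A. X s \<omega> \<partial>M)"
        using setint[OF t AM psim fint[OF t] _ Xi[OF t]] setint[OF s AM psim fint[OF s] _ Xi[OF s]]
          KI[OF s st A psim] by (simp add: X_def ev s t)
      moreover have "0 \<le> (\<integral>\<omega>\<in>A. X r \<omega> \<partial>M)" if "0 \<le> r" for r
        unfolding set_lebesgue_integral_def
        by (rule Bochner_Integration.integral_nonneg_AE) (rule AE_I2, simp add: X_def ev that)
      ultimately show "(\<integral>\<omega>\<in>A. X t \<omega> \<partial>M) = (\<integral>\<omega>\<in>A. X s \<omega> \<partial>M)"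
        using s t by simp
    qed (use Xi[OF t] Xi[OF s] XF[OF s] in auto)
  qed
  have cont_part: "AE \<omega> in M. continuous_on {0..} (\<lambda>t. mvm_eval \<xi> \<phi> t \<omega>)"
  proof -
    have G: "Good \<psi>" by (rule Good_all[OF psim fin0])
    with AE_space show ?thesis unfolding Good_def
    proof eventually_elim
      case (elim \<omega>)
      have "continuous_on {0..} (\<lambda>t. mvm_eval \<xi> \<phi> t \<omega>) \<longleftrightarrow> continuous_on {0..} (\<lambda>t. enn2real (NN t \<omega> \<psi>))"
        by (rule continuous_on_cong) (auto simp: ev elim)
      then show ?case using elim by simp
    qed
  qed
  have ui_part: "uniformly_integrable M {0..} X"
    unfolding uniformly_integrable_def
  proof (intro conjI ballI)
    fix t :: real assume "t \<in> {0..}" then show "integrable M (X t)" using Xi by auto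
  next
    define chf where "chf n x = ennreal (\<phi> x - real n)" for n x
    have chim: "chf n \<in> borel_measurable borel" for n unfolding chf_def using assms(2) by measurable
    define Gn where "Gn n = (\<integral>\<^sup>+\<omega>. NN 0 \<omega> (chf n) \<partial>M)" for n
    define \<nu> where "\<nu> = M \<bind> \<xi> 0"
    have nu_int: "(\<integral>\<^sup>+x. f x \<partial>\<nu>) = (\<integral>\<^sup>+\<omega>. NN 0 \<omega> f \<partial>M)" if "f \<in> borel_measurable borel" for f
      unfolding \<nu>_def by (rule nn_integral_bind[OF that xiM]) simp
    have ne: "space M \<noteq> {}" using prob prob_space.not_empty by blast
    have nu_sets: "sets \<nu> = sets borel" unfolding \<nu>_def
      by (rule sets_bind) (auto simp: xiS ne)
    have nu_meas: "f \<in> borel_measurable \<nu>" if "f \<in> borel_measurable borel" for f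
      using that by (subst measurable_cong_sets[OF nu_sets refl])
    have chidec: "decseq chf"
      by (intro decseq_SucI le_funI) (auto simp: chf_def intro!: ennreal_leI)
    have Gn_lim: "Gn \<longlonglongrightarrow> 0"
    proof -
      have "(INF n. Gn n) = (INF n. \<integral>\<^sup>+x. chf n x \<partial>\<nu>)"
        unfolding Gn_def using nu_int[OF chim] by simp
      also have "\<dots> = (\<integral>\<^sup>+x. (INF n. chf n x) \<partial>\<nu>)"
      proof (rule nn_integral_monotone_convergence_INF_decseq[symmetric, OF chidec])
        fix i show "chf i \<in> borel_measurable \<nu>" using nu_meas[OF chim] .
        have "(\<integral>\<^sup>+x. chf i x \<partial>\<nu>) \<le> (\<integral>\<^sup>+x. \<psi> x \<partial>\<nu>)"
          by (intro nn_integral_mono) (auto simp: chf_def \<psi>_def intro!: ennreal_leI assms(3))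
        also have "\<dots> < \<infinity>" using fin0 nu_int[OF psim] by simp
        finally show "(\<integral>\<^sup>+x. chf i x \<partial>\<nu>) < \<infinity>" .
      qed
      also have "\<dots> = (\<integral>\<^sup>+x. 0 \<partial>\<nu>)"
      proof (rule nn_integral_cong)
        fix x
        obtain n where "\<phi> x < real n" using reals_Archimedean2 by blast
        then have "chf n x = 0" unfolding chf_def by (simp add: ennreal_eq_0_iff)
        then show "(INF n. chf n x) = 0" by (metis INF_lower UNIV_I le_zero_eq)
      qed
      finally have I0: "(INF n. Gn n) = 0" by simp
      have "decseq Gn"
        unfolding Gn_def
        by (intro decseq_SucI nn_integral_mono) (auto intro!: ennreal_leI simp: chf_def)
      then have "Gn \<longlonglongrightarrow> (INF n. Gn n)" by (rule LIMSEQ_INF)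
      then show ?thesis using I0 by simp
    qed
    have bound: "(SUP t\<in>{0..}. \<integral>\<^sup>+\<omega>. ennreal \<bar>X t \<omega>\<bar> * indicator {\<omega>. K < \<bar>X t \<omega>\<bar>} \<omega> \<partial>M) \<le> 2 * Gn n"
      if K: "2 * real n \<le> K" for K n
    proof (rule SUP_least)
      fix t :: real assume "t \<in> {0..}"
      then have t: "0 \<le> t" by auto
      have pw: "ennreal \<bar>X t \<omega>\<bar> * indicator {\<omega>. K < \<bar>X t \<omega>\<bar>} \<omega> \<le> 2 * NN t \<omega> (chf n)"
        if w: "\<omega> \<in> space M" for \<omega>
      proof (cases "K < \<bar>X t \<omega>\<bar>")
        case False then show ?thesis by simp
      next
        case True
        define a where "a = NN t \<omega> (\<lambda>x. ennreal (min (\<phi> x) (real n)))"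
        define b where "b = NN t \<omega> (chf n)"
        have spl: "\<psi> x = ennreal (min (\<phi> x) (real n)) + chf n x" for x
        proof (cases "\<phi> x \<le> real n")
          case True then show ?thesis by (simp add: \<psi>_def chf_def ennreal_eq_0_iff)
        next
          case False then show ?thesis
            by (simp add: \<psi>_def chf_def ennreal_plus[symmetric])
        qed
        have m1: "(\<lambda>x. ennreal (min (\<phi> x) (real n))) \<in> borel_measurable borel"
          using assms(2) by measurable
        have ab: "NN t \<omega> \<psi> = a + b"
        proof -
          have "NN t \<omega> \<psi> = NN t \<omega> (\<lambda>x. ennreal (min (\<phi> x) (real n)) + chf n x)"
            by (simp only: spl)
          also have "\<dots> = a + b"
            unfolding a_def b_def by (rule nn_integral_add[OF meas_xi[OF t w m1] meas_xi[OF t w chim]])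
          finally show ?thesis .
        qed
        interpret P: prob_space "\<xi> t \<omega>" using xiP t w by auto
        have a_le: "a \<le> ennreal (real n)"
        proof -
          have "a \<le> (\<integral>\<^sup>+x. ennreal (real n) \<partial>\<xi> t \<omega>)"
            unfolding a_def by (intro nn_integral_mono) (auto intro!: ennreal_leI)
          also have "\<dots> = ennreal (real n)" by (simp add: P.emeasure_space_1)
          finally show ?thesis .
        qed
        have Xt: "X t \<omega> = enn2real (a + b)" using ev[OF t w] ab by (simp add: X_def)
        have K0: "0 \<le> K" using K by simp
        have pos: "0 < X t \<omega>" using True K0 Xt by auto
        then have finab: "a + b \<noteq> \<top>" using Xt by auto
        have eqab: "ennreal (X t \<omega>) = a + b" using Xt finab by (simp add: ennreal_enn2real_if)
        have Kab: "ennreal K < a + b"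
          using True pos eqab K0 by (metis abs_of_pos ennreal_less_iff)
        have "ennreal (real n) < b"
        proof (rule ccontr)
          assume "\<not> ennreal (real n) < b"
          then have "b \<le> ennreal (real n)" by simp
          then have "a + b \<le> ennreal (real n) + ennreal (real n)" using a_le by (rule add_mono[rotated])
          also have "\<dots> = ennreal (2 * real n)" by (simp flip: ennreal_plus)
          also have "\<dots> \<le> ennreal K" using K by (rule ennreal_leI)
          finally show False using Kab by simp
        qed
        then have "a \<le> b" using a_le by simp
        then have "a + b \<le> 2 * b" by (simp add: mult_2 add_right_mono)
        then show ?thesis
          using True eqab pos by (simp add: b_def)
      qed
      have "(\<integral>\<^sup>+\<omega>. ennreal \<bar>X t \<omega>\<bar> * indicator {\<omega>. K < \<bar>X t \<omega>\<bar>} \<omega> \<partial>M) \<le> (\<integral>\<^sup>+\<omega>. 2 * NN t \<omega> (chf n) \<partial>M)"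
        by (rule nn_integral_mono) (rule pw)
      also have "\<dots> = 2 * (\<integral>\<^sup>+\<omega>. NN t \<omega> (chf n) \<partial>M)"
        by (rule nn_integral_cmult[OF NmeasM[OF t chim]])
      also have "\<dots> = 2 * Gn n" unfolding Gn_def using KI0[OF t chim] by simp
      finally show "(\<integral>\<^sup>+\<omega>. ennreal \<bar>X t \<omega>\<bar> * indicator {\<omega>. K < \<bar>X t \<omega>\<bar>} \<omega> \<partial>M) \<le> 2 * Gn n" .
    qed
    have lim2: "(\<lambda>n. 2 * Gn n) \<longlonglongrightarrow> 2 * 0"
      by (rule ennreal_tendsto_cmult[OF _ Gn_lim]) simp
    show "((\<lambda>K::real. SUP t\<in>{0..}. \<integral>\<^sup>+\<omega>. ennreal \<bar>X t \<omega>\<bar> * indicator {\<omega>. K < \<bar>X t \<omega>\<bar>} \<omega> \<partial>M) \<longlongrightarrow> 0) at_top"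
    proof (rule order_tendstoI)
      fix a :: ennreal assume "a < 0" then show "\<forall>\<^sub>F K in at_top. a < (SUP t\<in>{0..}. \<integral>\<^sup>+\<omega>. ennreal \<bar>X t \<omega>\<bar> * indicator {\<omega>. K < \<bar>X t \<omega>\<bar>} \<omega> \<partial>M)"
        by simp
    next
      fix a :: ennreal assume a: "0 < a"
      have "\<forall>\<^sub>F n in sequentially. 2 * Gn n < a"
        using order_tendstoD(2)[OF lim2] a by simp
      then obtain n0 where n0: "2 * Gn n0 < a" by (auto simp: eventually_sequentially)
      show "\<forall>\<^sub>F K in at_top. (SUP t\<in>{0..}. \<integral>\<^sup>+\<omega>. ennreal \<bar>X t \<omega>\<bar> * indicator {\<omega>. K < \<bar>X t \<omega>\<bar>} \<omega> \<partial>M) < a"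
        unfolding eventually_at_top_linorder
        by (rule exI[of _ "2 * real n0"]) (auto intro: le_less_trans[OF bound n0])
    qed
  qed
  show ?thesis using mart_part cont_part ui_part unfolding X_def by blast
qed


end
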